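(* For every $n\ge1$, every $n\times n$ Hermitian matrix $A$ and every $1\le m\le n$, $$Y_{n,m}(A)\succ X_m(A),$$ i.e. the concatenation of $\binom{n-1}{m-1}$ copies of the eigenvalue vector of $A$ majorizes the vector of all eigenvalues of all $m\times m$ principal submatrices of $A$.
   Context: $\lambda(A)$ is the eigenvalue vector of $A$ with multiplicity; $X_m(A)$ is the vector listing the eigenvalues, with multiplicity, of all $\binom nm$ principal $m\times m$ submatrices of $A$; $Y_{n,m}(A)$ is the concatenation of $\binom{n-1}{m-1}$ copies of $\lambda(A)$. For $x,y\in\mathbb R^N$, $x\succ y$ means $\sum_{i=1}^k x^{\downarrow}_i\ge\sum_{i=1}^k y^{\downarrow}_i$ for $k=1,\dots,N$ with equality at $k=N$, where $x^{\downarrow}$ is the non-increasing rearrangement. *)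

theory Defs
  imports "Jordan_Normal_Form.Char_Poly" "Jordan_Normal_Form.DL_Submatrix"
begin

definition hermitian_mat :: "nat \<Rightarrow> complex mat \<Rightarrow> bool" where
  "hermitian_mat n A \<longleftrightarrow> A \<in> carrier_mat n n \<and>
     (\<forall>i<n. \<forall>j<n. A $$ (i, j) = cnj (A $$ (j, i)))"

text \<open>Eigenvalues with multiplicity (roots of the characteristic polynomial),
  as reals (for Hermitian matrices they are real).\<close>
definition eig_mset :: "complex mat \<Rightarrow> real multiset" where
  "eig_mset A = image_mset Re (proots (char_poly A))"

definition X_mset :: "nat \<Rightarrow> complex mat \<Rightarrow> real multiset" where
  "X_mset m A = (\<Sum>S \<in> {S. S \<subseteq> {..<dim_row A} \<and> card S = m}. eig_mset (submatrix A S S))"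

definition Y_mset :: "nat \<Rightarrow> nat \<Rightarrow> complex mat \<Rightarrow> real multiset" where
  "Y_mset n m A = repeat_mset ((n - 1) choose (m - 1)) (eig_mset A)"

definition decr :: "real multiset \<Rightarrow> real list" where
  "decr x = rev (sorted_list_of_multiset x)"

definition majorizes :: "real multiset \<Rightarrow> real multiset \<Rightarrow> bool" where
  "majorizes x y \<longleftrightarrow> size x = size y \<and>
     (\<forall>k\<in>{1..size x}. sum_list (take k (decr y)) \<le> sum_list (take k (decr x))) \<and>
     sum_list (decr x) = sum_list (decr y)"

end

theory Submission
  imports Defs "HOL-Computational_Algebra.Fundamental_Theorem_Algebra" "Jordan_Normal_Form.Schur_Decomposition"
begin


definition cadj :: "complex mat \<Rightarrow> complex mat" where
  "cadj A = mat (dim_col A) (dim_row A) (\<lambda>(i,j). cnj (A $$ (j,i)))"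

lemma cadj_index[simp]: "i < dim_col A \<Longrightarrow> j < dim_row A \<Longrightarrow> cadj A $$ (i,j) = cnj (A $$ (j,i))"
  and cadj_dim[simp]: "dim_row (cadj A) = dim_col A" "dim_col (cadj A) = dim_row A"
  by (auto simp: cadj_def)

lemma cadj_carrier[simp]: "A \<in> carrier_mat n m \<Longrightarrow> cadj A \<in> carrier_mat m n"
  by auto

lemma cadj_cadj[simp]: "cadj (cadj A) = A"
  by (rule eq_matI) auto

lemma mult_entry: "A \<in> carrier_mat nr n \<Longrightarrow> B \<in> carrier_mat n nc \<Longrightarrow> i < nr \<Longrightarrow> j < nc \<Longrightarrow>
  (A * B) $$ (i,j) = (\<Sum>k<n. A $$ (i,k) * B $$ (k,j))"
  by (auto simp: scalar_prod_def lessThan_atLeast0 intro!: sum.cong)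

lemma cadj_mult: "A \<in> carrier_mat nr n \<Longrightarrow> B \<in> carrier_mat n nc \<Longrightarrow> cadj (A * B) = cadj B * cadj A"
proof (rule eq_matI)
  fix i j assume A: "A \<in> carrier_mat nr n" and B: "B \<in> carrier_mat n nc" and ij: "i < dim_row (cadj B * cadj A)" "j < dim_col (cadj B * cadj A)"
  then have i: "i < nc" and j: "j < nr" by auto
  have "cadj (A * B) $$ (i, j) = cnj ((A * B) $$ (j, i))" using A B i j by simp
  also have "\<dots> = cnj (\<Sum>k<n. A $$ (j,k) * B $$ (k,i))" using mult_entry[OF A B j i] by simp
  also have "\<dots> = (\<Sum>k<n. cadj B $$ (i,k) * cadj A $$ (k,j))" using A B i j by (simp add: mult.commute)
  also have "\<dots> = (cadj B * cadj A) $$ (i, j)" using mult_entry[OF cadj_carrier[OF B] cadj_carrier[OF A] i j] by simp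
  finally show "cadj (A * B) $$ (i, j) = (cadj B * cadj A) $$ (i, j)" .
qed auto

lemma cadj_one[simp]: "cadj (1\<^sub>m n) = 1\<^sub>m n"
  by (rule eq_matI) auto

lemma cadj_zero[simp]: "cadj (0\<^sub>m n m) = 0\<^sub>m m n"
  by (rule eq_matI) auto

lemma cadj_four_block:
  assumes "A \<in> carrier_mat n1 m1" "B \<in> carrier_mat n1 m2" "C \<in> carrier_mat n2 m1" "D \<in> carrier_mat n2 m2"
  shows "cadj (four_block_mat A B C D) = four_block_mat (cadj A) (cadj C) (cadj B) (cadj D)"
  by (rule eq_matI) (use assms in auto)

lemma cscalar_self: assumes "w \<in> carrier_vec n" shows "w \<bullet>c w = of_real (\<Sum>i<n. (cmod (w$i))^2)"
proof -
  have "w \<bullet>c w = (\<Sum>i<n. w$i * cnj(w$i))" using assms by (auto simp: scalar_prod_def lessThan_atLeast0)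
  also have "\<dots> = (\<Sum>i<n. complex_of_real ((cmod (w$i))^2))" by (simp only: complex_norm_square)
  also have "\<dots> = of_real (\<Sum>i<n. (cmod (w$i))^2)" by (simp only: of_real_sum)
  finally show ?thesis .
qed

lemma cscalar_smult: "v \<in> carrier_vec n \<Longrightarrow> w \<in> carrier_vec n \<Longrightarrow>
   (a \<cdot>\<^sub>v v) \<bullet>c (b \<cdot>\<^sub>v w) = a * cnj b * (v \<bullet>c w)"
  by (auto simp: scalar_prod_def sum_distrib_left intro!: sum.cong)

definition nz :: "complex vec \<Rightarrow> complex vec" where
  "nz w = complex_of_real (1 / sqrt (Re (w \<bullet>c w))) \<cdot>\<^sub>v w"

lemma nz_carrier[simp]: "w \<in> carrier_vec n \<Longrightarrow> nz w \<in> carrier_vec n"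
  by (simp add: nz_def)

lemma nz_orth:
  assumes ws: "set ws \<subseteq> carrier_vec n" and orth: "corthogonal ws"
    and i: "i < length ws" and j: "j < length ws"
  shows "nz (ws!i) \<bullet>c nz (ws!j) = (if i = j then 1 else 0)"
proof -
  have wi: "ws!i \<in> carrier_vec n" and wj: "ws!j \<in> carrier_vec n" using ws i j by auto
  have e: "nz (ws!i) \<bullet>c nz (ws!j) = complex_of_real (1 / sqrt (Re (ws!i \<bullet>c ws!i))) * complex_of_real (1 / sqrt (Re (ws!j \<bullet>c ws!j))) * (ws!i \<bullet>c ws!j)"
    unfolding nz_def by (subst cscalar_smult[OF wi wj]) simp
  show ?thesis
  proof (cases "i = j")
    case True
    have nz: "ws!i \<bullet>c ws!i \<noteq> 0" using corthogonalD[OF orth i i] by simp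
    define r where "r = (\<Sum>k<n. (cmod (ws!i$k))^2)"
    have ri: "ws!i \<bullet>c ws!i = of_real r" unfolding r_def by (rule cscalar_self[OF wi])
    have "r \<ge> 0" unfolding r_def by (auto intro: sum_nonneg)
    moreover have "r \<noteq> 0" using nz ri by auto
    ultimately have rp: "r > 0" by auto
    have r1: "1 / sqrt r * (1 / sqrt r) * r = 1" using rp
      by (simp add: divide_simps)
    have "complex_of_real (1 / sqrt r) * complex_of_real (1 / sqrt r) * complex_of_real r = 1"
      by (simp only: of_real_mult[symmetric] r1) simp
    moreover have "Re (ws!i \<bullet>c ws!i) = r" using ri by simp
    ultimately have "nz (ws!i) \<bullet>c nz (ws!i) = 1" using e[unfolded True[symmetric]] ri by simp
    then show ?thesis using True by simp
  next
    case False
    then show ?thesis using e corthogonalD[OF orth i j] by simp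
  qed
qed

lemma unitary_col0:
  assumes v: "v \<in> carrier_vec n" and v0: "v \<noteq> 0\<^sub>v n"
  shows "\<exists>W. W \<in> carrier_mat n n \<and> cadj W * W = 1\<^sub>m n \<and> W * cadj W = 1\<^sub>m n \<and> (\<exists>c. col W 0 = c \<cdot>\<^sub>v v)"
proof -
  interpret cof_vec_space n "TYPE(complex)" .
  define b where "b = basis_completion v"
  from basis_completion[OF v v0, folded b_def]
  have dist_b: "distinct b" 
    and indep: "\<not> lin_dep (set b)" and b: "set b \<subseteq> carrier_vec n" and hdb: "hd b = v" 
    and len_b: "length b = n" by auto
  have n: "n \<noteq> 0" using v0 v by (metis carrier_vecD eq_vecI less_nat_zero_code zero_carrier_vec)
  from hdb len_b n obtain vs where bv: "b = v # vs" by (cases b, auto)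
  define ws where "ws = gram_schmidt n b"
  from gram_schmidt_result[OF b dist_b indep refl, folded ws_def]
  have ws: "set ws \<subseteq> carrier_vec n" "corthogonal ws" "length ws = n" 
    by (auto simp: len_b)
  from gram_schmidt_hd[OF v, of vs, folded bv] have hdws: "hd ws = v" unfolding ws_def .
  define W where "W = mat_of_cols n (map nz ws)"
  have W: "W \<in> carrier_mat n n" unfolding W_def using ws by auto
  have WW: "cadj W * W = 1\<^sub>m n"
  proof (rule eq_matI)
    fix i j assume "i < dim_row (1\<^sub>m n)" "j < dim_col (1\<^sub>m n)"
    then have i: "i < n" and j: "j < n" by auto
    have wi: "ws!i \<in> carrier_vec n" "ws!j \<in> carrier_vec n" using ws i j by auto
    have "(cadj W * W) $$ (i,j) = (\<Sum>k<n. cadj W $$ (i,k) * W $$ (k,j))"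
      using mult_entry[OF cadj_carrier[OF W] W i j] .
    also have "\<dots> = (\<Sum>k<n. nz (ws!j) $ k * cnj (nz (ws!i) $ k))"
      using W i j ws by (auto simp: W_def mat_of_cols_index mult.commute intro!: sum.cong)
    also have "\<dots> = nz (ws!j) \<bullet>c nz (ws!i)"
      using nz_carrier[OF wi(1)] by (auto simp: scalar_prod_def lessThan_atLeast0)
    also have "\<dots> = 1\<^sub>m n $$ (i,j)" using nz_orth[OF ws(1) ws(2), of j i] ws i j by auto
    finally show "(cadj W * W) $$ (i,j) = 1\<^sub>m n $$ (i,j)" .
  qed (use W in auto)
  have WW': "W * cadj W = 1\<^sub>m n"
    by (rule mat_mult_left_right_inverse[OF cadj_carrier[OF W] W WW])
  have "ws ! 0 = v" using hdws ws n by (cases ws) auto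
  then have "col W 0 = nz v" unfolding W_def using ws n v by (subst col_mat_of_cols) auto
  then have "col W 0 = complex_of_real (1 / sqrt (Re (v \<bullet>c v))) \<cdot>\<^sub>v v" unfolding nz_def .
  then show ?thesis using W WW WW' by blast
qed

lemma spectral:
  "A \<in> carrier_mat n n \<Longrightarrow> cadj A = A \<Longrightarrow> \<exists>P D. P \<in> carrier_mat n n \<and> D \<in> carrier_mat n n \<and>
     diagonal_mat D \<and> (\<forall>i<n. D $$ (i,i) \<in> \<real>) \<and> cadj P * P = 1\<^sub>m n \<and> P * cadj P = 1\<^sub>m n \<and> A = P * D * cadj P"
proof (induction n arbitrary: A)
  case 0
  then show ?case
    by (intro exI[of _ "1\<^sub>m 0"] exI[of _ A]) (auto simp: diagonal_mat_def)
next
  case (Suc k A)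
  define n where "n = Suc k"
  have A: "A \<in> carrier_mat n n" and hA: "cadj A = A" using Suc n_def by auto
  have "degree (char_poly A) = n" using degree_monic_char_poly[OF A] by auto
  then have "\<not> constant (poly (char_poly A))" unfolding constant_degree n_def by simp
  then obtain e where "poly (char_poly A) e = 0" using fundamental_theorem_of_algebra by blast
  then have "eigenvalue A e" using eigenvalue_root_char_poly[OF A] by simp
  from find_eigenvector[OF A this] obtain v where "eigenvector A v e" by blast
  then have v: "v \<in> carrier_vec n" and v0: "v \<noteq> 0\<^sub>v n" and Av: "A *\<^sub>v v = e \<cdot>\<^sub>v v"
    unfolding eigenvector_def using A by auto
  from unitary_col0[OF v v0] obtain W c where W: "W \<in> carrier_mat n n" and WW: "cadj W * W = 1\<^sub>m n"
    and WW': "W * cadj W = 1\<^sub>m n" and cW: "col W 0 = c \<cdot>\<^sub>v v" by blast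
  have n0: "0 < n" unfolding n_def by simp
  have AW0: "A *\<^sub>v col W 0 = e \<cdot>\<^sub>v col W 0"
    unfolding cW using A v Av by (simp add: mult_mat_vec[OF A v] smult_smult_assoc mult.commute)
  define A' where "A' = cadj W * A * W"
  have A': "A' \<in> carrier_mat n n" unfolding A'_def using A W by auto
  have hA': "cadj A' = A'"
  proof -
    have "cadj (cadj W * A * W) = cadj W * cadj (cadj W * A)"
      using A W by (subst cadj_mult[of _ n n _ n]) auto
    also have "cadj (cadj W * A) = cadj A * W"
      using A W by (subst cadj_mult[of _ n n _ n]) auto
    finally show ?thesis unfolding A'_def using A W hA by (simp add: assoc_mult_mat[of _ n n _ n _ n])
  qed
  have col0: "col A' 0 = e \<cdot>\<^sub>v unit_vec n 0"
  proof -
    have "col A' 0 = (cadj W * A) *\<^sub>v col W 0" unfolding A'_def using A W n0 by (subst col_mult2[of _ n n]) auto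
    also have "\<dots> = cadj W *\<^sub>v (A *\<^sub>v col W 0)" using A W n0 by (subst assoc_mult_mat_vec[of _ n n]) auto
    also have "\<dots> = e \<cdot>\<^sub>v (cadj W *\<^sub>v col W 0)" unfolding AW0 using W n0 by (subst mult_mat_vec[of _ n n]) auto
    also have "cadj W *\<^sub>v col W 0 = col (cadj W * W) 0" using W n0 by (subst col_mult2[of _ n n]) auto
    also have "\<dots> = unit_vec n 0" unfolding WW using n0 by simp
    finally show ?thesis .
  qed
  have A'c: "i < n \<Longrightarrow> A' $$ (i,0) = (if i = 0 then e else 0)" for i
  proof -
    assume i: "i < n"
    have "A' $$ (i,0) = col A' 0 $ i" using A' i n0 by simp
    then show ?thesis using col0 i by simp
  qed
  have A'r: "j < n \<Longrightarrow> A' $$ (0,j) = cnj (A' $$ (j,0))" for j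
    using hA' A' n0 by (metis cadj_index carrier_matD)
  have ereal: "cnj e = e" using A'r[OF n0] A'c[OF n0] by simp
  define A3 where "A3 = mat k k (\<lambda>(i,j). A' $$ (Suc i, Suc j))"
  have A3: "A3 \<in> carrier_mat k k" unfolding A3_def by simp
  have hA3: "cadj A3 = A3"
  proof (rule eq_matI)
    fix i j assume "i < dim_row A3" "j < dim_col A3"
    then have i: "i < k" and j: "j < k" using A3 by auto
    have "A' $$ (Suc i, Suc j) = cnj (A' $$ (Suc j, Suc i))"
      using hA' A' i j unfolding n_def by (metis cadj_index carrier_matD Suc_less_eq)
    then show "cadj A3 $$ (i, j) = A3 $$ (i, j)" using i j by (simp add: A3_def)
  qed (use A3 in auto)
  from Suc.IH[OF A3 hA3] obtain P3 D3 where P3: "P3 \<in> carrier_mat k k" and D3: "D3 \<in> carrier_mat k k"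
    and dD3: "diagonal_mat D3" and rD3: "\<forall>i<k. D3 $$ (i,i) \<in> \<real>" and PP3: "cadj P3 * P3 = 1\<^sub>m k"
    and PP3': "P3 * cadj P3 = 1\<^sub>m k" and A3e: "A3 = P3 * D3 * cadj P3" by blast
  define E where "E = mat 1 1 (\<lambda>_. e)"
  have E: "E \<in> carrier_mat 1 1" unfolding E_def by simp
  have A'b: "A' = four_block_mat E (0\<^sub>m 1 k) (0\<^sub>m k 1) A3"
  proof (rule eq_matI)
    fix i j assume ij: "i < dim_row (four_block_mat E (0\<^sub>m 1 k) (0\<^sub>m k 1) A3)" "j < dim_col (four_block_mat E (0\<^sub>m 1 k) (0\<^sub>m k 1) A3)"
    then have i: "i < Suc k" and j: "j < Suc k" using E A3 by auto
    show "A' $$ (i, j) = four_block_mat E (0\<^sub>m 1 k) (0\<^sub>m k 1) A3 $$ (i, j)"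
    proof (cases "i = 0 \<or> j = 0")
      case True
      then show ?thesis using i j E A3 A'c A'r ereal unfolding n_def
        by (auto simp: E_def)
    next
      case False
      then obtain i' j' where "i = Suc i'" "j = Suc j'" by (metis not0_implies_Suc)
      then show ?thesis using i j E A3 by (auto simp: A3_def)
    qed
  qed (use E A3 A' n_def in auto)
  define F where "F = four_block_mat (1\<^sub>m 1) (0\<^sub>m 1 k) (0\<^sub>m k 1) P3"
  define D where "D = four_block_mat E (0\<^sub>m 1 k) (0\<^sub>m k 1) D3"
  have F: "F \<in> carrier_mat n n" unfolding F_def n_def using P3 by auto
  have D: "D \<in> carrier_mat n n" unfolding D_def n_def using D3 E by auto
  have cF: "cadj F = four_block_mat (1\<^sub>m 1) (0\<^sub>m 1 k) (0\<^sub>m k 1) (cadj P3)"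
    unfolding F_def using P3 by (subst cadj_four_block) auto
  have FF: "cadj F * F = 1\<^sub>m n" unfolding cF unfolding F_def n_def
    using P3 PP3 by (subst mult_four_block_mat[of _ 1 1 _ k _ k _ _ 1 _ k]) auto
  have FF': "F * cadj F = 1\<^sub>m n" unfolding cF unfolding F_def n_def
    using P3 PP3' by (subst mult_four_block_mat[of _ 1 1 _ k _ k _ _ 1 _ k]) auto
  have FDF: "F * D * cadj F = A'"
  proof -
    have "F * D = four_block_mat E (0\<^sub>m 1 k) (0\<^sub>m k 1) (P3 * D3)"
      unfolding F_def D_def using P3 D3 E by (subst mult_four_block_mat[of _ 1 1 _ k _ k _ _ 1 _ k]) auto
    also have "\<dots> * cadj F = four_block_mat E (0\<^sub>m 1 k) (0\<^sub>m k 1) (P3 * D3 * cadj P3)"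
      unfolding cF using P3 D3 E by (subst mult_four_block_mat[of _ 1 1 _ k _ k _ _ 1 _ k]) auto
    finally show ?thesis unfolding A'b A3e .
  qed
  define P where "P = W * F"
  have P: "P \<in> carrier_mat n n" unfolding P_def using W F by auto
  have cP: "cadj P = cadj F * cadj W" unfolding P_def using W F by (simp add: cadj_mult[of _ n n])
  have cW: "cadj W \<in> carrier_mat n n" and cFc: "cadj F \<in> carrier_mat n n" using W F by auto
  note as = assoc_mult_mat[of _ n n _ n _ n]
  have PP: "cadj P * P = 1\<^sub>m n"
  proof -
    have "cadj P * P = (cadj F * cadj W) * (W * F)" unfolding cP unfolding P_def ..
    also have "\<dots> = cadj F * (cadj W * (W * F))" using as[OF cFc cW] W F by auto
    also have "cadj W * (W * F) = (cadj W * W) * F" using as[OF cW W F] by simp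
    finally show ?thesis using WW FF F by simp
  qed
  have PP': "P * cadj P = 1\<^sub>m n"
  proof -
    have "P * cadj P = (W * F) * (cadj F * cadj W)" unfolding cP unfolding P_def ..
    also have "\<dots> = W * (F * (cadj F * cadj W))" using as[OF W F] cFc cW by auto
    also have "F * (cadj F * cadj W) = (F * cadj F) * cadj W" using as[OF F cFc cW] by simp
    finally show ?thesis using WW' FF' W by simp
  qed
  have AP: "A = P * D * cadj P"
  proof -
    have FD: "F * D \<in> carrier_mat n n" using F D by auto
    have e1: "F * D * (cadj F * cadj W) = (F * D * cadj F) * cadj W" by (rule as[symmetric, OF FD cFc cW])
    have "P * D * cadj P = ((W * F) * D) * (cadj F * cadj W)" unfolding cP unfolding P_def ..
    also have "(W * F) * D = W * (F * D)" using as[OF W F D] .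
    also have "W * (F * D) * (cadj F * cadj W) = W * (F * D * (cadj F * cadj W))" using as[OF W FD] cFc cW by auto
    also have "F * D * (cadj F * cadj W) = (F * D * cadj F) * cadj W" by (rule e1)
    also have "\<dots> = cadj W * A * W * cadj W" unfolding FDF A'_def ..
    also have "\<dots> = cadj W * A"
    proof -
      have X: "cadj W * A \<in> carrier_mat n n" using A cW by auto
      have "cadj W * A * W * cadj W = cadj W * A * (W * cadj W)" by (rule as[OF X W cW])
      then show ?thesis using WW' right_mult_one_mat[OF X] by metis
    qed
    also have "W * (cadj W * A) = (W * cadj W) * A" by (rule as[symmetric, OF W cW A])
    finally show ?thesis using WW' A by simp
  qed
  have dD: "diagonal_mat D"
    unfolding diagonal_mat_def D_def using D3 E dD3 by (auto simp: diagonal_mat_def E_def)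
  have rD: "\<forall>i<n. D $$ (i,i) \<in> \<real>"
    unfolding D_def using D3 E rD3 ereal n_def by (auto simp: E_def Reals_cnj_iff)
  show ?case using P D dD rD PP PP' AP unfolding n_def by blast
qed




lemma proots_linear_prod: "proots (\<Prod>a\<leftarrow>xs. [:- a, 1:]) = mset (xs :: complex list)"
proof (induction xs)
  case (Cons a xs)
  have nz: "(\<Prod>a\<leftarrow>xs. [:- a, 1:]) \<noteq> (0::complex poly)" by (auto simp: prod_list_zero_iff)
  have "proots ([:- a, 1:] * (\<Prod>a\<leftarrow>xs. [:- a, 1:])) = proots [:- a, 1:] + proots (\<Prod>a\<leftarrow>xs. [:- a, 1:])"
    by (rule proots_mult) (use nz in auto)
  also have "proots [:- a, 1:] = {#a#}" using proots_linear_factor[of "-a"] by simp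
  finally show ?case using Cons.IH by simp
qed simp

lemma spectral_entries:
  assumes A: "A \<in> carrier_mat n n" and hA: "cadj A = A"
  shows "\<exists>U (lam :: nat \<Rightarrow> real). U \<in> carrier_mat n n \<and>
    (\<forall>i<n. \<forall>j<n. (\<Sum>k<n. cnj (U$$(k,i)) * U$$(k,j)) = (if i = j then 1 else 0)) \<and>
    (\<forall>i<n. \<forall>j<n. (\<Sum>k<n. U$$(i,k) * cnj (U$$(j,k))) = (if i = j then 1 else 0)) \<and>
    (\<forall>i<n. \<forall>j<n. A$$(i,j) = (\<Sum>k<n. U$$(i,k) * of_real (lam k) * cnj (U$$(j,k)))) \<and>
    eig_mset A = mset (map lam [0..<n])"
proof -
  from spectral[OF A hA] obtain P D where P: "P \<in> carrier_mat n n" and D: "D \<in> carrier_mat n n"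
    and dD: "diagonal_mat D" and rD: "\<forall>i<n. D $$ (i,i) \<in> \<real>" and PP: "cadj P * P = 1\<^sub>m n"
    and PP': "P * cadj P = 1\<^sub>m n" and AP: "A = P * D * cadj P" by blast
  define lam where "lam k = Re (D $$ (k,k))" for k
  have Dl: "k < n \<Longrightarrow> D $$ (k,k) = of_real (lam k)" for k
    using rD unfolding lam_def by (simp add: Reals_cnj_iff complex_eq_iff)
  have Dkl: "k < n \<Longrightarrow> l < n \<Longrightarrow> D $$ (k,l) = (if k = l then of_real (lam l) else 0)" for k l
    using dD D Dl unfolding diagonal_mat_def by auto
  have o1: "\<forall>i<n. \<forall>j<n. (\<Sum>k<n. cnj (P$$(k,i)) * P$$(k,j)) = (if i = j then 1 else 0)"
  proof (intro allI impI)
    fix i j assume i: "i < n" and j: "j < n"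
    have "(cadj P * P) $$ (i,j) = (\<Sum>k<n. cadj P $$ (i,k) * P $$ (k,j))" by (rule mult_entry[OF cadj_carrier[OF P] P i j])
    then show "(\<Sum>k<n. cnj (P$$(k,i)) * P$$(k,j)) = (if i = j then 1 else 0)" using PP P i j by simp
  qed
  have o2: "\<forall>i<n. \<forall>j<n. (\<Sum>k<n. P$$(i,k) * cnj (P$$(j,k))) = (if i = j then 1 else 0)"
  proof (intro allI impI)
    fix i j assume i: "i < n" and j: "j < n"
    have "(P * cadj P) $$ (i,j) = (\<Sum>k<n. P $$ (i,k) * cadj P $$ (k,j))" by (rule mult_entry[OF P cadj_carrier[OF P] i j])
    then show "(\<Sum>k<n. P$$(i,k) * cnj (P$$(j,k))) = (if i = j then 1 else 0)" using PP' P i j by simp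
  qed
  have ae: "\<forall>i<n. \<forall>j<n. A$$(i,j) = (\<Sum>k<n. P$$(i,k) * of_real (lam k) * cnj (P$$(j,k)))"
  proof (intro allI impI)
    fix i j assume i: "i < n" and j: "j < n"
    have PD: "P * D \<in> carrier_mat n n" using P D by auto
    have "A $$ (i,j) = (\<Sum>l<n. (P * D) $$ (i,l) * cadj P $$ (l,j))" unfolding AP by (rule mult_entry[OF PD cadj_carrier[OF P] i j])
    also have "\<dots> = (\<Sum>l<n. (\<Sum>k<n. P $$ (i,k) * D $$ (k,l)) * cnj (P $$ (j,l)))"
      using mult_entry[OF P D i] P j by (intro sum.cong) auto
    also have "\<dots> = (\<Sum>l<n. P$$(i,l) * of_real (lam l) * cnj (P$$(j,l)))"
    proof (rule sum.cong)
      fix l assume l: "l \<in> {..<n}"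
      have "(\<Sum>k<n. P $$ (i,k) * D $$ (k,l)) = (\<Sum>k<n. if k = l then P $$ (i,k) * of_real (lam l) else 0)"
        using Dkl l by (intro sum.cong) auto
      also have "\<dots> = P $$ (i,l) * of_real (lam l)" using l by (simp add: sum.delta)
      finally show "(\<Sum>k<n. P $$ (i,k) * D $$ (k,l)) * cnj (P $$ (j,l)) = P$$(i,l) * of_real (lam l) * cnj (P$$(j,l))" by simp
    qed simp
    finally show "A$$(i,j) = (\<Sum>k<n. P$$(i,k) * of_real (lam k) * cnj (P$$(j,k)))" .
  qed
  have dA: "dim_row A = n" and dDn: "dim_row D = n" using A D by auto
  have "similar_mat_wit A D P (cadj P)" unfolding similar_mat_wit_def Let_def dA insert_subset
    using A D P cadj_carrier[OF P] PP PP' AP by blast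
  then have sim: "similar_mat A D" unfolding similar_mat_def by blast
  have ut: "upper_triangular D" using dD D unfolding diagonal_mat_def upper_triangular_def by auto
  have "char_poly A = (\<Prod>a\<leftarrow>diag_mat D. [:- a, 1:])"
    unfolding char_poly_similar[OF sim] by (rule char_poly_upper_triangular[OF D ut])
  then have "proots (char_poly A) = mset (diag_mat D)" by (simp add: proots_linear_prod)
  then have "eig_mset A = mset (map lam [0..<n])"
    unfolding eig_mset_def diag_mat_def lam_def dDn by (simp add: mset_map multiset.map_comp o_def)
  then show ?thesis using P o1 o2 ae by blast
qed


lemma pick_bij:
  assumes fin: "finite S" and cS: "card S = m"
  shows "bij_betw (pick S) {..<m} S"
proof -
  have inj: "inj_on (pick S) {..<m}"
  proof (rule inj_onI)
    fix a b assume a: "a \<in> {..<m}" and b: "b \<in> {..<m}" and e: "pick S a = pick S b"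
    show "a = b"
    proof (rule ccontr)
      assume "a \<noteq> b"
      then have "a < b \<or> b < a" by auto
      then show False using pick_mono_le[of a S b] pick_mono_le[of b S a] a b e cS by auto
    qed
  qed
  have sub: "pick S ` {..<m} \<subseteq> S" using pick_in_set_le cS by auto
  have "card (pick S ` {..<m}) = m" using card_image[OF inj] by simp
  then have "pick S ` {..<m} = S" using card_subset_eq[OF fin sub] cS by simp
  then show ?thesis using inj unfolding bij_betw_def by simp
qed

lemma qform:
  fixes x :: "nat \<Rightarrow> complex" and X :: "nat \<Rightarrow> nat \<Rightarrow> complex"
  shows "(\<Sum>a<m. \<Sum>b<m. cnj (x a) * (\<Sum>l<n. X a l * c l * cnj (X b l)) * x b) =
    (\<Sum>l<n. c l * (\<Sum>a<m. cnj (x a) * X a l) * cnj (\<Sum>b<m. cnj (x b) * X b l))"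
proof -
  have "(\<Sum>a<m. \<Sum>b<m. cnj (x a) * (\<Sum>l<n. X a l * c l * cnj (X b l)) * x b) =
     (\<Sum>a<m. \<Sum>b<m. \<Sum>l<n. c l * (cnj (x a) * X a l) * (x b * cnj (X b l)))"
    by (simp add: sum_distrib_left sum_distrib_right mult_ac)
  also have "\<dots> = (\<Sum>a<m. \<Sum>l<n. \<Sum>b<m. c l * (cnj (x a) * X a l) * (x b * cnj (X b l)))"
    by (rule sum.cong[OF refl], rule sum.swap)
  also have "\<dots> = (\<Sum>l<n. \<Sum>a<m. \<Sum>b<m. c l * (cnj (x a) * X a l) * (x b * cnj (X b l)))"
    by (rule sum.swap)
  also have "\<dots> = (\<Sum>l<n. c l * (\<Sum>a<m. cnj (x a) * X a l) * cnj (\<Sum>b<m. cnj (x b) * X b l))"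
    by (simp add: sum_distrib_left sum_distrib_right mult_ac cnj_sum)
  finally show ?thesis .
qed

lemma qform2:
  fixes y :: "nat \<Rightarrow> nat \<Rightarrow> complex" and z :: "nat \<Rightarrow> complex"
  shows "(\<Sum>j<m. (\<Sum>a<m. y a j * z a) * cnj (\<Sum>b<m. y b j * z b)) =
    (\<Sum>a<m. \<Sum>b<m. z a * cnj (z b) * (\<Sum>j<m. y a j * cnj (y b j)))"
proof -
  have "(\<Sum>j<m. (\<Sum>a<m. y a j * z a) * cnj (\<Sum>b<m. y b j * z b)) =
    (\<Sum>j<m. \<Sum>b<m. \<Sum>a<m. z a * cnj (z b) * (y a j * cnj (y b j)))"
    by (simp add: sum_distrib_left sum_distrib_right mult_ac cnj_sum)
  also have "\<dots> = (\<Sum>j<m. \<Sum>a<m. \<Sum>b<m. z a * cnj (z b) * (y a j * cnj (y b j)))"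
    by (rule sum.cong[OF refl], rule sum.swap)
  also have "\<dots> = (\<Sum>a<m. \<Sum>j<m. \<Sum>b<m. z a * cnj (z b) * (y a j * cnj (y b j)))"
    by (rule sum.swap)
  also have "\<dots> = (\<Sum>a<m. \<Sum>b<m. \<Sum>j<m. z a * cnj (z b) * (y a j * cnj (y b j)))"
    by (rule sum.cong[OF refl], rule sum.swap)
  also have "\<dots> = (\<Sum>a<m. \<Sum>b<m. z a * cnj (z b) * (\<Sum>j<m. y a j * cnj (y b j)))"
    by (simp add: sum_distrib_left)
  finally show ?thesis .
qed

lemma cmod_sq: "complex_of_real ((cmod z)^2) = z * cnj z"
  by (rule complex_norm_square)

lemma per_S:
  assumes A: "A \<in> carrier_mat n n" and hA: "cadj A = A"
  and Ucol: "\<forall>i<n. \<forall>j<n. (\<Sum>k<n. cnj (U$$(k,i)) * U$$(k,j)) = (if i = j then 1 else 0)"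
  and Urow: "\<forall>i<n. \<forall>j<n. (\<Sum>k<n. U$$(i,k) * cnj (U$$(j,k))) = (if i = j then 1 else 0)"
  and Ae: "\<forall>i<n. \<forall>j<n. A$$(i,j) = (\<Sum>k<n. U$$(i,k) * of_real (lam k) * cnj (U$$(j,k)))"
  and S: "S \<subseteq> {..<n}" and cS: "card S = m"
  shows "\<exists>(w::nat\<Rightarrow>nat\<Rightarrow>real) mu. eig_mset (submatrix A S S) = mset (map mu [0..<m]) \<and>
    (\<forall>j l. 0 \<le> w j l) \<and> (\<forall>j<m. mu j = (\<Sum>l<n. w j l * lam l)) \<and> (\<forall>j<m. (\<Sum>l<n. w j l) = 1) \<and>
    (\<forall>l<n. (\<Sum>j<m. w j l) = (\<Sum>i\<in>S. (cmod (U$$(i,l)))^2))"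
proof -
  have fin: "finite S" using S finite_subset by blast
  have SS: "{i. i < dim_row A \<and> i \<in> S} = S" "{i. i < dim_col A \<and> i \<in> S} = S" using A S by auto
  define B where "B = submatrix A S S"
  have B: "B \<in> carrier_mat m m" unfolding B_def using dim_submatrix[of A S S] SS cS by auto
  define s where "s = pick S"
  have bij: "bij_betw s {..<m} S" unfolding s_def by (rule pick_bij[OF fin cS])
  have sS: "a < m \<Longrightarrow> s a \<in> S" for a using bij by (auto simp: bij_betw_def)
  have sn: "a < m \<Longrightarrow> s a < n" for a using sS S by auto
  have sinj: "a < m \<Longrightarrow> b < m \<Longrightarrow> s a = s b \<longleftrightarrow> a = b" for a b
    using bij by (auto simp: bij_betw_def inj_on_def)
  have Bi: "a < m \<Longrightarrow> b < m \<Longrightarrow> B $$ (a,b) = A $$ (s a, s b)" for a b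
    unfolding B_def s_def using cS SS by (subst submatrix_index) auto
  have hB: "cadj B = B"
  proof (rule eq_matI)
    fix a b assume "a < dim_row B" "b < dim_col B"
    then have a: "a < m" and b: "b < m" using B by auto
    have "A $$ (s a, s b) = cnj (A $$ (s b, s a))" using hA A sn[OF a] sn[OF b] by (metis cadj_index carrier_matD)
    then show "cadj B $$ (a, b) = B $$ (a, b)" using a b B Bi by simp
  qed (use B in auto)
  from spectral_entries[OF B hB] obtain V and mu :: "nat \<Rightarrow> real" where
    Vcol: "\<forall>i<m. \<forall>j<m. (\<Sum>k<m. cnj (V$$(k,i)) * V$$(k,j)) = (if i = j then 1 else 0)" and
    Vrow: "\<forall>i<m. \<forall>j<m. (\<Sum>k<m. V$$(i,k) * cnj (V$$(j,k))) = (if i = j then 1 else 0)" and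
    Be: "\<forall>i<m. \<forall>j<m. B$$(i,j) = (\<Sum>k<m. V$$(i,k) * of_real (mu k) * cnj (V$$(j,k)))" and
    eig: "eig_mset B = mset (map mu [0..<m])" by blast
  define Wc where "Wc j l = (\<Sum>a<m. cnj (V$$(a,j)) * U$$(s a, l))" for j l
  define w where "w j l = (cmod (Wc j l))^2" for j l
  have ww: "complex_of_real (w j l) = Wc j l * cnj (Wc j l)" for j l unfolding w_def by (rule cmod_sq)
  have muj: "mu j = (\<Sum>l<n. w j l * lam l)" if j: "j < m" for j
  proof -
    have "(\<Sum>a<m. \<Sum>b<m. cnj (V$$(a,j)) * B $$ (a,b) * V$$(b,j)) =
        (\<Sum>a<m. \<Sum>b<m. cnj (V$$(a,j)) * (\<Sum>l<m. V$$(a,l) * of_real (mu l) * cnj (V$$(b,l))) * V$$(b,j))"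
      using Be by (intro sum.cong) auto
    also have "\<dots> = (\<Sum>l<m. of_real (mu l) * (\<Sum>a<m. cnj (V$$(a,j)) * V$$(a,l)) * cnj (\<Sum>b<m. cnj (V$$(b,j)) * V$$(b,l)))"
      by (rule qform)
    also have "\<dots> = (\<Sum>l<m. if l = j then of_real (mu j) else 0)"
      using Vcol j by (intro sum.cong) auto
    also have "\<dots> = of_real (mu j)" using j by simp
    finally have e1: "(\<Sum>a<m. \<Sum>b<m. cnj (V$$(a,j)) * B $$ (a,b) * V$$(b,j)) = of_real (mu j)" .
    have "(\<Sum>a<m. \<Sum>b<m. cnj (V$$(a,j)) * B $$ (a,b) * V$$(b,j)) =
        (\<Sum>a<m. \<Sum>b<m. cnj (V$$(a,j)) * (\<Sum>l<n. U$$(s a,l) * of_real (lam l) * cnj (U$$(s b,l))) * V$$(b,j))"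
      using Ae Bi sn by (intro sum.cong) auto
    also have "\<dots> = (\<Sum>l<n. of_real (lam l) * Wc j l * cnj (Wc j l))"
      unfolding Wc_def by (rule qform)
    also have "\<dots> = of_real (\<Sum>l<n. w j l * lam l)"
      by (simp add: of_real_sum ww mult_ac)
    finally have "complex_of_real (mu j) = complex_of_real (\<Sum>l<n. w j l * lam l)" using e1 by simp
    then show ?thesis by (metis of_real_eq_iff)
  qed
  have wrow: "(\<Sum>l<n. w j l) = 1" if j: "j < m" for j
  proof -
    have "complex_of_real (\<Sum>l<n. w j l) = (\<Sum>l<n. 1 * Wc j l * cnj (Wc j l))"
      by (simp add: of_real_sum ww)
    also have "\<dots> = (\<Sum>a<m. \<Sum>b<m. cnj (V$$(a,j)) * (\<Sum>l<n. U$$(s a,l) * 1 * cnj (U$$(s b,l))) * V$$(b,j))"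
      unfolding Wc_def by (rule qform[symmetric])
    also have "\<dots> = (\<Sum>a<m. \<Sum>b<m. if a = b then cnj (V$$(a,j)) * V$$(b,j) else 0)"
      using Urow sn sinj by (intro sum.cong) auto
    also have "\<dots> = (\<Sum>a<m. cnj (V$$(a,j)) * V$$(a,j))" by simp
    also have "\<dots> = 1" using Vcol j by simp
    finally show ?thesis by (metis of_real_eq_1_iff)
  qed
  have wcol: "(\<Sum>j<m. w j l) = (\<Sum>i\<in>S. (cmod (U$$(i,l)))^2)" if l: "l < n" for l
  proof -
    have "complex_of_real (\<Sum>j<m. w j l) = (\<Sum>j<m. Wc j l * cnj (Wc j l))"
      by (simp add: of_real_sum ww)
    also have "\<dots> = (\<Sum>a<m. \<Sum>b<m. U$$(s a,l) * cnj (U$$(s b,l)) * (\<Sum>j<m. cnj (V$$(a,j)) * cnj (cnj (V$$(b,j)))))"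
      unfolding Wc_def by (rule qform2)
    also have "\<dots> = (\<Sum>a<m. \<Sum>b<m. if a = b then U$$(s a,l) * cnj (U$$(s b,l)) else 0)"
    proof (intro sum.cong refl)
      fix a b assume a: "a \<in> {..<m}" and b: "b \<in> {..<m}"
      have "(\<Sum>j<m. cnj (V$$(a,j)) * cnj (cnj (V$$(b,j)))) = (\<Sum>j<m. V$$(b,j) * cnj (V$$(a,j)))"
        by (simp add: mult.commute)
      also have "\<dots> = (if b = a then 1 else 0)" using Vrow a b by auto
      finally show "U$$(s a,l) * cnj (U$$(s b,l)) * (\<Sum>j<m. cnj (V$$(a,j)) * cnj (cnj (V$$(b,j)))) = (if a = b then U$$(s a,l) * cnj (U$$(s b,l)) else 0)"
        by auto
    qed
    also have "\<dots> = (\<Sum>a<m. complex_of_real ((cmod (U$$(s a,l)))^2))" by (simp only: cmod_sq) simp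
    also have "\<dots> = complex_of_real (\<Sum>a<m. (cmod (U$$(s a,l)))^2)" by (simp add: of_real_sum)
    also have "(\<Sum>a<m. (cmod (U$$(s a,l)))^2) = (\<Sum>i\<in>S. (cmod (U$$(i,l)))^2)"
      using sum.reindex_bij_betw[OF bij, of "\<lambda>i. (cmod (U$$(i,l)))^2"] by simp
    finally show ?thesis by (metis of_real_eq_iff)
  qed
  have "\<forall>j l. 0 \<le> w j l" unfolding w_def by simp
  then show ?thesis using eig muj wrow wcol unfolding B_def by blast
qed



lemma doubly:
  fixes w :: "nat \<Rightarrow> nat \<Rightarrow> real"
  assumes w0: "\<forall>j l. 0 \<le> w j l" and rows: "\<forall>j<m. (\<Sum>l<n. w j l) = 1"
    and mu: "\<forall>j<m. mu j = (\<Sum>l<n. w j l * lam l)"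
  shows "(\<Sum>j<m. mu j) = (\<Sum>l<n. (\<Sum>j<m. w j l) * lam l)"
    and "(\<Sum>j<m. 1::real) = (\<Sum>l<n. (\<Sum>j<m. w j l) * 1)"
    and "(\<Sum>j<m. max 0 (mu j - t)) \<le> (\<Sum>l<n. (\<Sum>j<m. w j l) * max 0 (lam l - t))"
proof -
  show "(\<Sum>j<m. mu j) = (\<Sum>l<n. (\<Sum>j<m. w j l) * lam l)"
    using mu by (simp add: sum_distrib_right sum.swap[of _ "{..<n}"])
  show "(\<Sum>j<m. 1::real) = (\<Sum>l<n. (\<Sum>j<m. w j l) * 1)"
  proof -
    have "(\<Sum>j<m. 1::real) = (\<Sum>j<m. \<Sum>l<n. w j l)" using rows by simp
    also have "\<dots> = (\<Sum>l<n. \<Sum>j<m. w j l)" by (rule sum.swap)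
    finally show ?thesis by simp
  qed
  have each: "max 0 (mu j - t) \<le> (\<Sum>l<n. w j l * max 0 (lam l - t))" if j: "j < m" for j
  proof -
    have "mu j - t = (\<Sum>l<n. w j l * (lam l - t))"
      using mu rows j by (simp add: right_diff_distrib sum_subtractf sum_distrib_right[symmetric])
    also have "\<dots> \<le> (\<Sum>l<n. w j l * max 0 (lam l - t))"
      using w0 by (intro sum_mono mult_left_mono) auto
    finally have "mu j - t \<le> (\<Sum>l<n. w j l * max 0 (lam l - t))" .
    moreover have "0 \<le> (\<Sum>l<n. w j l * max 0 (lam l - t))" using w0 by (intro sum_nonneg) auto
    ultimately show ?thesis by simp
  qed
  have "(\<Sum>j<m. max 0 (mu j - t)) \<le> (\<Sum>j<m. \<Sum>l<n. w j l * max 0 (lam l - t))"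
    using each by (intro sum_mono) auto
  also have "\<dots> = (\<Sum>l<n. (\<Sum>j<m. w j l) * max 0 (lam l - t))"
    by (simp add: sum_distrib_right sum.swap[of _ "{..<n}"])
  finally show "(\<Sum>j<m. max 0 (mu j - t)) \<le> (\<Sum>l<n. (\<Sum>j<m. w j l) * max 0 (lam l - t))" .
qed

lemma count_subsets:
  assumes i: "i < n" and m: "1 \<le> m"
  shows "card {S. S \<subseteq> {..<n} \<and> card S = m \<and> i \<in> S} = (n - 1) choose (m - 1)"
proof -
  have bij: "bij_betw (\<lambda>S. S - {i}) {S. S \<subseteq> {..<n} \<and> card S = m \<and> i \<in> S} {T. T \<subseteq> {..<n} - {i} \<and> card T = m - 1}"
  proof (rule bij_betw_byWitness[where f' = "insert i"])
    show "\<forall>S\<in>{S. S \<subseteq> {..<n} \<and> card S = m \<and> i \<in> S}. insert i (S - {i}) = S" by auto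
    show "\<forall>T\<in>{T. T \<subseteq> {..<n} - {i} \<and> card T = m - 1}. insert i T - {i} = T" by auto
    show "(\<lambda>S. S - {i}) ` {S. S \<subseteq> {..<n} \<and> card S = m \<and> i \<in> S} \<subseteq> {T. T \<subseteq> {..<n} - {i} \<and> card T = m - 1}"
    proof
      fix T assume "T \<in> (\<lambda>S. S - {i}) ` {S. S \<subseteq> {..<n} \<and> card S = m \<and> i \<in> S}"
      then obtain S where S: "S \<subseteq> {..<n}" "card S = m" "i \<in> S" and T: "T = S - {i}" by auto
      have "finite S" using S(1) finite_subset by blast
      then show "T \<in> {T. T \<subseteq> {..<n} - {i} \<and> card T = m - 1}" using S T by auto
    qed
    show "insert i ` {T. T \<subseteq> {..<n} - {i} \<and> card T = m - 1} \<subseteq> {S. S \<subseteq> {..<n} \<and> card S = m \<and> i \<in> S}"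
    proof
      fix S assume "S \<in> insert i ` {T. T \<subseteq> {..<n} - {i} \<and> card T = m - 1}"
      then obtain T where T: "T \<subseteq> {..<n} - {i}" "card T = m - 1" and S: "S = insert i T" by auto
      have "finite T" using T(1) finite_subset by blast
      moreover have "i \<notin> T" using T by auto
      ultimately show "S \<in> {S. S \<subseteq> {..<n} \<and> card S = m \<and> i \<in> S}" using S T i m by auto
    qed
  qed
  have "card {T. T \<subseteq> {..<n} - {i} \<and> card T = m - 1} = card ({..<n} - {i}) choose (m - 1)"
    by (rule n_subsets) simp
  also have "card ({..<n} - {i}) = n - 1" using i by simp
  finally show ?thesis using bij_betw_same_card[OF bij] by simp
qed

lemma sum_subsets:
  fixes h :: "nat \<Rightarrow> real"
  assumes m: "1 \<le> m"
  shows "(\<Sum>S\<in>{S. S \<subseteq> {..<n} \<and> card S = m}. \<Sum>i\<in>S. h i) = real ((n - 1) choose (m - 1)) * (\<Sum>i<n. h i)"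
proof -
  define F where "F = {S. S \<subseteq> {..<n} \<and> card S = m}"
  have finF: "finite F" unfolding F_def by (rule finite_subset[of _ "Pow {..<n}"]) auto
  have "(\<Sum>S\<in>F. \<Sum>i\<in>S. h i) = (\<Sum>S\<in>F. \<Sum>i<n. if i \<in> S then h i else 0)"
  proof (rule sum.cong[OF refl])
    fix S assume "S \<in> F"
    then have "S \<subseteq> {..<n}" unfolding F_def by auto
    then show "(\<Sum>i\<in>S. h i) = (\<Sum>i<n. if i \<in> S then h i else 0)"
      by (simp add: sum.If_cases Int_absorb1)
  qed
  also have "\<dots> = (\<Sum>i<n. \<Sum>S\<in>F. if i \<in> S then h i else 0)" by (rule sum.swap)
  also have "\<dots> = (\<Sum>i<n. real ((n - 1) choose (m - 1)) * h i)"
  proof (rule sum.cong[OF refl])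
    fix i assume i: "i \<in> {..<n}"
    have "(\<Sum>S\<in>F. if i \<in> S then h i else 0) = (\<Sum>S\<in>{S\<in>F. i \<in> S}. h i)"
      by (rule sum.inter_filter[symmetric, OF finF])
    also have "\<dots> = real (card {S\<in>F. i \<in> S}) * h i" by simp
    also have "{S\<in>F. i \<in> S} = {S. S \<subseteq> {..<n} \<and> card S = m \<and> i \<in> S}" unfolding F_def by auto
    also have "card \<dots> = (n - 1) choose (m - 1)" using count_subsets[of i n m] i m by auto
    finally show "(\<Sum>S\<in>F. if i \<in> S then h i else 0) = real ((n - 1) choose (m - 1)) * h i" .
  qed
  finally show ?thesis unfolding F_def by (simp add: sum_distrib_left)
qed

lemma take_split_eq:
  fixes zs :: "real list"
  assumes "k \<le> length zs" and "\<forall>i<k. t \<le> zs!i" and "\<forall>i. k \<le> i \<and> i < length zs \<longrightarrow> zs!i \<le> t"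
  shows "sum_list (take k zs) = sum_list (map (\<lambda>z. max 0 (z - t)) zs) + real k * t"
  using assms
proof (induction zs arbitrary: k)
  case Nil
  then show ?case by simp
next
  case (Cons z zs k)
  show ?case
  proof (cases k)
    case 0
    have "\<forall>x\<in>set (z # zs). x \<le> t"
    proof
      fix x assume "x \<in> set (z # zs)"
      then obtain i where "i < length (z # zs)" "x = (z # zs) ! i" by (metis in_set_conv_nth)
      then show "x \<le> t" using Cons.prems(3) 0 by auto
    qed
    then have "sum_list (map (\<lambda>z. max 0 (z - t)) (z # zs)) = sum_list (map (\<lambda>z. 0) (z # zs))"
      by (intro arg_cong[where f = sum_list] map_cong) auto
    then have "sum_list (map (\<lambda>z. max 0 (z - t)) (z # zs)) = 0" by simp
    then show ?thesis using 0 by simp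
  next
    case (Suc k')
    have IH: "sum_list (take k' zs) = sum_list (map (\<lambda>z. max 0 (z - t)) zs) + real k' * t"
    proof (rule Cons.IH)
      show "k' \<le> length zs" using Cons.prems Suc by simp
      show "\<forall>i<k'. t \<le> zs ! i"
      proof (intro allI impI)
        fix i assume "i < k'"
        then have "t \<le> (z # zs) ! Suc i" using Cons.prems(2) Suc by blast
        then show "t \<le> zs ! i" by simp
      qed
      show "\<forall>i. k' \<le> i \<and> i < length zs \<longrightarrow> zs ! i \<le> t"
      proof (intro allI impI)
        fix i assume "k' \<le> i \<and> i < length zs"
        then have "(z # zs) ! Suc i \<le> t" using Cons.prems(3) Suc by auto
        then show "zs ! i \<le> t" by simp
      qed
    qed
    have "t \<le> (z # zs) ! 0" using Cons.prems(2) Suc by blast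
    then have "t \<le> z" by simp
    then show ?thesis using IH Suc by (simp add: algebra_simps)
  qed
qed

lemma take_le:
  fixes zs :: "real list"
  shows "sum_list (take k zs) \<le> sum_list (map (\<lambda>z. max 0 (z - t)) zs) + real (min k (length zs)) * t"
proof (induction zs arbitrary: k)
  case Nil
  then show ?case by simp
next
  case (Cons z zs k)
  show ?case
  proof (cases k)
    case 0
    then show ?thesis by (auto intro!: add_nonneg_nonneg sum_list_nonneg)
  next
    case (Suc k')
    have "sum_list (take k' zs) \<le> sum_list (map (\<lambda>z. max 0 (z - t)) zs) + real (min k' (length zs)) * t"
      by (rule Cons.IH)
    then show ?thesis using Suc by (simp add: algebra_simps)
  qed
qed

lemma msum_list: "(\<Sum>x\<in>#mset xs. g x) = sum_list (map g xs)"
  by (induction xs) auto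

lemma maj_from_pos:
  assumes sz: "size X = size Y" and sm: "sum_mset X = sum_mset Y"
    and pos: "\<forall>t. (\<Sum>x\<in>#X. max 0 (x - t)) \<le> (\<Sum>x\<in>#Y. max 0 (x - t))"
  shows "majorizes Y X"
proof -
  define xs where "xs = decr X"
  define ys where "ys = decr Y"
  have mx: "mset xs = X" unfolding xs_def decr_def by simp
  have my: "mset ys = Y" unfolding ys_def decr_def by simp
  have lx: "length xs = size X" using mx by (metis size_mset)
  have ly: "length ys = size Y" using my by (metis size_mset)
  have sy: "sorted_wrt (\<ge>) ys" unfolding ys_def decr_def by (simp add: sorted_wrt_rev)
  have sumx: "sum_list xs = sum_mset X" using mx by (metis sum_mset_sum_list)
  have sumy: "sum_list ys = sum_mset Y" using my by (metis sum_mset_sum_list)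
  have part: "sum_list (take k xs) \<le> sum_list (take k ys)" if k: "k \<in> {1..size Y}" for k
  proof -
    define t where "t = ys ! (k - 1)"
    have k1: "1 \<le> k" and kl: "k \<le> length ys" using k ly by auto
    have a1: "\<forall>i<k. t \<le> ys!i"
    proof (intro allI impI)
      fix i assume "i < k"
      then show "t \<le> ys!i" unfolding t_def using sy kl
        by (cases "i = k - 1") (auto simp: sorted_wrt_iff_nth_less)
    qed
    have a2: "\<forall>i. k \<le> i \<and> i < length ys \<longrightarrow> ys!i \<le> t"
      unfolding t_def using sy kl k1 by (auto simp: sorted_wrt_iff_nth_less)
    have "sum_list (take k xs) \<le> sum_list (map (\<lambda>z. max 0 (z - t)) xs) + real (min k (length xs)) * t"
      by (rule take_le)
    also have "min k (length xs) = k" using kl lx ly sz by simp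
    also have "sum_list (map (\<lambda>z. max 0 (z - t)) xs) = (\<Sum>x\<in>#X. max 0 (x - t))"
      using msum_list[of "\<lambda>z. max 0 (z - t)" xs] mx by simp
    also have "\<dots> \<le> (\<Sum>x\<in>#Y. max 0 (x - t))" using pos by blast
    also have "(\<Sum>x\<in>#Y. max 0 (x - t)) = sum_list (map (\<lambda>z. max 0 (z - t)) ys)"
      using msum_list[of "\<lambda>z. max 0 (z - t)" ys] my by simp
    also have "sum_list (map (\<lambda>z. max 0 (z - t)) ys) + real k * t = sum_list (take k ys)"
      using take_split_eq[OF kl a1 a2] by simp
    finally show ?thesis by simp
  qed
  show ?thesis unfolding majorizes_def
    using sz part sumx sumy sm unfolding xs_def ys_def by auto
qed


lemma msum_sum: "finite F \<Longrightarrow> (\<Sum>x\<in>#(\<Sum>S\<in>F. M S). g x) = (\<Sum>S\<in>F. (\<Sum>x\<in>#M S. (g x :: real)))"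
  by (induction F rule: finite_induct) auto

lemma msum_repeat: "(\<Sum>x\<in>#repeat_mset c M. g x) = real c * (\<Sum>x\<in>#M. (g x :: real))"
proof (induction c)
  case (Suc c)
  have "(\<Sum>x\<in>#repeat_mset (Suc c) M. g x) = (\<Sum>x\<in>#M. g x) + (\<Sum>x\<in>#repeat_mset c M. g x)" by simp
  also have "\<dots> = (\<Sum>x\<in>#M. g x) + real c * (\<Sum>x\<in>#M. g x)" using Suc.IH by simp
  also have "\<dots> = real (Suc c) * (\<Sum>x\<in>#M. g x)" by (simp only: of_nat_Suc distrib_right mult_1_left add.commute)
  finally show ?case .
qed simp

lemma msum_upt: "(\<Sum>x\<in>#mset (map f [0..<m]). g x) = (\<Sum>j<m. (g (f j) :: real))"
proof -
  have "(\<Sum>x\<in>#mset (map f [0..<m]). g x) = sum_list (map g (map f [0..<m]))" by (rule msum_list)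
  also have "\<dots> = sum_list (map (\<lambda>j. g (f j)) [0..<m])" by (simp add: o_def)
  also have "\<dots> = (\<Sum>j\<in>set [0..<m]. g (f j))" by (rule sum_set_upt_conv_sum_list_nat[symmetric])
  also have "\<dots> = (\<Sum>j<m. g (f j))" by (simp add: atLeast0LessThan)
  finally show ?thesis .
qed

lemma msum_one: "(\<Sum>x\<in>#M. (1::real)) = real (size M)"
  by (induction M) auto



theorem theorem4p5:
  fixes n m :: nat and A :: "complex mat"
  assumes "1 \<le> n" and "hermitian_mat n A" and "1 \<le> m" and "m \<le> n"
  shows "majorizes (Y_mset n m A) (X_mset m A)"
proof -
  have A: "A \<in> carrier_mat n n" using assms(2) unfolding hermitian_mat_def by blast
  have herm: "\<forall>i<n. \<forall>j<n. A $$ (i, j) = cnj (A $$ (j, i))"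
    using assms(2) unfolding hermitian_mat_def by blast
  have hA: "cadj A = A"
  proof (rule eq_matI)
    fix i j assume "i < dim_row A" "j < dim_col A"
    then have i: "i < n" and j: "j < n" using A by auto
    have e: "A $$ (i, j) = cnj (A $$ (j, i))" using herm i j by blast
    show "cadj A $$ (i, j) = A $$ (i, j)" using A i j e by simp
  qed (use A in auto)
  from spectral_entries[OF A hA] obtain U and lam :: "nat \<Rightarrow> real" where
    Ucol: "\<forall>i<n. \<forall>j<n. (\<Sum>k<n. cnj (U$$(k,i)) * U$$(k,j)) = (if i = j then 1 else 0)" and
    Urow: "\<forall>i<n. \<forall>j<n. (\<Sum>k<n. U$$(i,k) * cnj (U$$(j,k))) = (if i = j then 1 else 0)" and
    Ae: "\<forall>i<n. \<forall>j<n. A$$(i,j) = (\<Sum>k<n. U$$(i,k) * of_real (lam k) * cnj (U$$(j,k)))" and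
    eigA: "eig_mset A = mset (map lam [0..<n])" by blast
  define F where "F = {S. S \<subseteq> {..<n} \<and> card S = m}"
  have finF: "finite F" unfolding F_def by (rule finite_subset[of _ "Pow {..<n}"]) auto
  define C where "C = (n - 1) choose (m - 1)"
  have "\<forall>S\<in>F. \<exists>(w::nat\<Rightarrow>nat\<Rightarrow>real) mu. eig_mset (submatrix A S S) = mset (map mu [0..<m]) \<and>
    (\<forall>j l. 0 \<le> w j l) \<and> (\<forall>j<m. mu j = (\<Sum>l<n. w j l * lam l)) \<and> (\<forall>j<m. (\<Sum>l<n. w j l) = 1) \<and>
    (\<forall>l<n. (\<Sum>j<m. w j l) = (\<Sum>i\<in>S. (cmod (U$$(i,l)))^2))"
  proof
    fix S assume "S \<in> F"
    then have S: "S \<subseteq> {..<n}" and cS: "card S = m" unfolding F_def by auto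
    show "\<exists>(w::nat\<Rightarrow>nat\<Rightarrow>real) mu. eig_mset (submatrix A S S) = mset (map mu [0..<m]) \<and>
    (\<forall>j l. 0 \<le> w j l) \<and> (\<forall>j<m. mu j = (\<Sum>l<n. w j l * lam l)) \<and> (\<forall>j<m. (\<Sum>l<n. w j l) = 1) \<and>
    (\<forall>l<n. (\<Sum>j<m. w j l) = (\<Sum>i\<in>S. (cmod (U$$(i,l)))^2))"
      by (rule per_S[OF A hA Ucol Urow Ae S cS])
  qed
  from this[THEN bchoice] obtain Wf where "\<forall>S\<in>F. \<exists>mu. eig_mset (submatrix A S S) = mset (map mu [0..<m]) \<and>
    (\<forall>j l. 0 \<le> Wf S j l) \<and> (\<forall>j<m. mu j = (\<Sum>l<n. Wf S j l * lam l)) \<and> (\<forall>j<m. (\<Sum>l<n. Wf S j l) = 1) \<and>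
    (\<forall>l<n. (\<Sum>j<m. Wf S j l) = (\<Sum>i\<in>S. (cmod (U$$(i,l)))^2))"
    by blast
  from this[THEN bchoice] obtain Mf where H: "\<forall>S\<in>F. eig_mset (submatrix A S S) = mset (map (Mf S) [0..<m]) \<and>
    (\<forall>j l. 0 \<le> Wf S j l) \<and> (\<forall>j<m. Mf S j = (\<Sum>l<n. Wf S j l * lam l)) \<and> (\<forall>j<m. (\<Sum>l<n. Wf S j l) = 1) \<and>
    (\<forall>l<n. (\<Sum>j<m. Wf S j l) = (\<Sum>i\<in>S. (cmod (U$$(i,l)))^2))"
    by blast
  have colU: "(\<Sum>i<n. (cmod (U$$(i,l)))^2) = 1" if l: "l < n" for l
  proof -
    have "complex_of_real (\<Sum>i<n. (cmod (U$$(i,l)))^2) = (\<Sum>i<n. cnj (U$$(i,l)) * U$$(i,l))"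
      by (simp only: of_real_sum cmod_sq mult.commute)
    also have "\<dots> = 1" using Ucol l by simp
    finally show ?thesis by (metis of_real_eq_1_iff)
  qed
  have Cg: "(\<Sum>S\<in>F. \<Sum>l<n. (\<Sum>j<m. Wf S j l) * g l) = real C * (\<Sum>l<n. g l)" for g :: "nat \<Rightarrow> real"
  proof -
    have "(\<Sum>S\<in>F. \<Sum>l<n. (\<Sum>j<m. Wf S j l) * g l) = (\<Sum>l<n. \<Sum>S\<in>F. (\<Sum>j<m. Wf S j l) * g l)"
      by (rule sum.swap)
    also have "\<dots> = (\<Sum>l<n. (\<Sum>S\<in>F. \<Sum>i\<in>S. (cmod (U$$(i,l)))^2) * g l)"
      using H by (auto simp: sum_distrib_right intro!: sum.cong)
    also have "\<dots> = (\<Sum>l<n. real C * g l)"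
      using sum_subsets[OF assms(3), of "\<lambda>i. (cmod (U$$(_,_)))^2"] colU
      by (intro sum.cong refl) (simp add: F_def C_def sum_subsets[OF assms(3)])
    finally show ?thesis by (simp add: sum_distrib_left)
  qed
  have X: "X_mset m A = (\<Sum>S\<in>F. mset (map (Mf S) [0..<m]))"
    unfolding X_mset_def F_def using A H unfolding F_def by (intro sum.cong) auto
  have Y: "Y_mset n m A = repeat_mset C (mset (map lam [0..<n]))"
    unfolding Y_mset_def C_def eigA ..
  have sX: "(\<Sum>x\<in>#X_mset m A. g x) = (\<Sum>S\<in>F. \<Sum>j<m. g (Mf S j))" for g :: "real \<Rightarrow> real"
    unfolding X by (simp only: msum_sum[OF finF] msum_upt)
  have sY: "(\<Sum>x\<in>#Y_mset n m A. g x) = real C * (\<Sum>l<n. g (lam l))" for g :: "real \<Rightarrow> real"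
    unfolding Y by (simp only: msum_repeat msum_upt)
  have pos: "\<forall>t. (\<Sum>x\<in>#X_mset m A. max 0 (x - t)) \<le> (\<Sum>x\<in>#Y_mset n m A. max 0 (x - t))"
  proof
    fix t
    have "(\<Sum>S\<in>F. \<Sum>j<m. max 0 (Mf S j - t)) \<le> (\<Sum>S\<in>F. \<Sum>l<n. (\<Sum>j<m. Wf S j l) * max 0 (lam l - t))"
      using H by (intro sum_mono doubly(3)) auto
    then show "(\<Sum>x\<in>#X_mset m A. max 0 (x - t)) \<le> (\<Sum>x\<in>#Y_mset n m A. max 0 (x - t))"
      unfolding sX sY Cg .
  qed
  have sm: "sum_mset (X_mset m A) = sum_mset (Y_mset n m A)"
  proof -
    have "(\<Sum>S\<in>F. \<Sum>j<m. Mf S j) = (\<Sum>S\<in>F. \<Sum>l<n. (\<Sum>j<m. Wf S j l) * lam l)"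
      using H by (intro sum.cong refl doubly(1)) auto
    then have "(\<Sum>x\<in>#X_mset m A. x) = (\<Sum>x\<in>#Y_mset n m A. x)"
      unfolding sX sY Cg .
    then show ?thesis by simp
  qed
  have sz: "size (X_mset m A) = size (Y_mset n m A)"
  proof -
    have "(\<Sum>S\<in>F. \<Sum>j<m. (1::real)) = (\<Sum>S\<in>F. \<Sum>l<n. (\<Sum>j<m. Wf S j l) * 1)"
      using H by (intro sum.cong refl doubly(2)) auto
    then have "(\<Sum>x\<in>#X_mset m A. (1::real)) = (\<Sum>x\<in>#Y_mset n m A. 1)"
      unfolding sX sY Cg .
    then show ?thesis unfolding msum_one by simp
  qed
  show ?thesis by (rule maj_from_pos[OF sz sm pos])
qed


end
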